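(* Let $c>0$. The planar system $$\dot x=x(1-y+cx),\qquad \dot y=y(-1+x)$$ has no formal first integrals.
   Context: A formal first integral is a non-constant formal power series $f\in\mathbb{C}[[x,y]]$ with $x(1-y+cx)\partial_x f+y(-1+x)\partial_y f=0$. *)

theory Defs
  imports Complex_Main
begin

text \<open>A formal power series in two variables x, y over the complex numbers, represented
  by its coefficient function: f i j is the coefficient of x^i y^j.\<close>
type_synonym fps2 = "nat \<Rightarrow> nat \<Rightarrow> complex"

definition fps2_dx :: "fps2 \<Rightarrow> fps2" where
  "fps2_dx f = (\<lambda>i j. of_nat (Suc i) * f (Suc i) j)"

definition fps2_dy :: "fps2 \<Rightarrow> fps2" where
  "fps2_dy f = (\<lambda>i j. of_nat (Suc j) * f i (Suc j))"

definition fps2_mult_x :: "fps2 \<Rightarrow> fps2" where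
  "fps2_mult_x f = (\<lambda>i j. if i = 0 then 0 else f (i - 1) j)"

definition fps2_mult_y :: "fps2 \<Rightarrow> fps2" where
  "fps2_mult_y f = (\<lambda>i j. if j = 0 then 0 else f i (j - 1))"

definition fps2_const :: "complex \<Rightarrow> fps2" where
  "fps2_const a = (\<lambda>i j. if i = 0 \<and> j = 0 then a else 0)"

text \<open>The derivation x(1 - y + c x) d/dx + y(-1 + x) d/dy applied to f, written out
  coefficientwise as x f_x - y (x f_x) + c x (x f_x) - y f_y + x (y f_y).\<close>
definition vf_apply :: "complex \<Rightarrow> fps2 \<Rightarrow> fps2" where
  "vf_apply c f = (\<lambda>i j.
      fps2_mult_x (fps2_dx f) i j
    - fps2_mult_y (fps2_mult_x (fps2_dx f)) i j
    + c * fps2_mult_x (fps2_mult_x (fps2_dx f)) i j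
    - fps2_mult_y (fps2_dy f) i j
    + fps2_mult_x (fps2_mult_y (fps2_dy f)) i j)"

definition formal_first_integral :: "complex \<Rightarrow> fps2 \<Rightarrow> bool" where
  "formal_first_integral c f \<longleftrightarrow>
     (\<forall>a. f \<noteq> fps2_const a) \<and> (\<forall>i j. vf_apply c f i j = 0)"

end

theory Submission
  imports Defs
begin

lemma vf_formula:
  "vf_apply c f i j = of_nat i * f i j - (if j = 0 then 0 else of_nat i * f i (j-1))
     + (if i = 0 then 0 else c * of_nat (i-1) * f (i-1) j) - of_nat j * f i j
     + (if i = 0 then 0 else of_nat j * f (i-1) j)"
  by (cases i; cases j) (auto simp: vf_apply_def fps2_mult_x_def fps2_mult_y_def
        fps2_dx_def fps2_dy_def)

theorem proposition3p3:
  fixes c :: real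
  assumes "c > 0"
  shows "\<not> (\<exists>f. formal_first_integral (complex_of_real c) f)"
proof
  assume "\<exists>f. formal_first_integral (complex_of_real c) f"
  then obtain f where nc: "\<And>a. f \<noteq> fps2_const a"
    and E0: "\<And>i j. vf_apply (complex_of_real c) f i j = 0"
    unfolding formal_first_integral_def by blast
  define C where "C = complex_of_real c"
  have E: "of_nat i * f i j - (if j = 0 then 0 else of_nat i * f i (j-1))
     + (if i = 0 then 0 else C * of_nat (i-1) * f (i-1) j) - of_nat j * f i j
     + (if i = 0 then 0 else of_nat j * f (i-1) j) = 0" for i j
    using E0[of i j] unfolding vf_formula C_def .
  have "\<exists>d. d \<ge> 1 \<and> (\<exists>i j. i + j = d \<and> f i j \<noteq> 0)"
  proof (rule ccontr)
    assume "\<not> ?thesis"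
    hence "\<And>i j. i + j \<ge> 1 \<Longrightarrow> f i j = 0" by blast
    hence "f = fps2_const (f 0 0)"
      by (intro ext) (auto simp: fps2_const_def)
    with nc show False by blast
  qed
  define d where "d = (LEAST d. d \<ge> 1 \<and> (\<exists>i j. i + j = d \<and> f i j \<noteq> 0))"
  have dP: "d \<ge> 1 \<and> (\<exists>i j. i + j = d \<and> f i j \<noteq> 0)"
    unfolding d_def by (rule LeastI_ex) fact
  have small: "f i j = 0" if "i + j \<ge> 1" "i + j < d" for i j
    using not_less_Least[of "i+j" "\<lambda>d. d \<ge> 1 \<and> (\<exists>i j. i + j = d \<and> f i j \<noteq> 0)"] that
    unfolding d_def[symmetric] by auto
  have offdiag: "f i j = 0" if "i + j = d" "i \<noteq> j" for i j
  proof -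
    have t1: "(if j = 0 then 0 else of_nat i * f i (j-1)) = 0"
    proof (cases "j = 0")
      case False
      show ?thesis
      proof (cases "i = 0")
        case False
        then have "f i (j-1) = 0" using small[of i "j-1"] \<open>j \<noteq> 0\<close> that by auto
        then show ?thesis by simp
      qed simp
    qed simp
    have t2: "(if i = 0 then 0 else C * of_nat (i-1) * f (i-1) j) = 0"
         "(if i = 0 then 0 else of_nat j * f (i-1) j) = 0"
    proof -
      have "i = 0 \<or> f (i-1) j = 0 \<or> (i = 1 \<and> j = 0)"
        using small[of "i-1" j] that dP by (cases "i = 0"; cases "i = 1") auto
      then show "(if i = 0 then 0 else C * of_nat (i-1) * f (i-1) j) = 0"
         "(if i = 0 then 0 else of_nat j * f (i-1) j) = 0" by auto
    qed
    have "(of_nat i - of_nat j) * f i j = 0"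
      using E[of i j] t1 t2 by (simp add: algebra_simps)
    moreover have "(of_nat i - of_nat j :: complex) \<noteq> 0" using that(2) by simp
    ultimately show ?thesis by simp
  qed
  obtain i j where ij: "i + j = d" "f i j \<noteq> 0" using dP by blast
  have "i = j" using offdiag ij by blast
  obtain m where m: "i = Suc m" using ij dP \<open>i = j\<close> by (cases i) auto
  define a where "a = f (Suc m) (Suc m)"
  have a0: "a \<noteq> 0" using ij \<open>i = j\<close> m a_def by simp
  have z1: "f (Suc (Suc m)) m = 0" using offdiag[of "Suc (Suc m)" m] ij \<open>i = j\<close> m by simp
  have z2: "f m (Suc (Suc m)) = 0" using offdiag[of m "Suc (Suc m)"] ij \<open>i = j\<close> m by simp
  have e1': "f (Suc (Suc m)) (Suc m) + of_nat (Suc m) * (C + 1) * a = 0"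
    using E[of "Suc (Suc m)" "Suc m"] z1 unfolding a_def
    by (simp add: algebra_simps)
  have e1: "f (Suc (Suc m)) (Suc m) = - (of_nat (Suc m) * (C + 1) * a)"
    using e1' by (simp add: add_eq_0_iff2)
  have e2': "f (Suc m) (Suc (Suc m)) + of_nat (Suc m) * a = 0"
    using E[of "Suc m" "Suc (Suc m)"] z2 unfolding a_def
    by (simp add: algebra_simps) (metis add.commute add_eq_0_iff2)
  have e2: "f (Suc m) (Suc (Suc m)) = - (of_nat (Suc m) * a)"
    using e2' by (simp add: add_eq_0_iff2)
  have e3: "- of_nat (Suc (Suc m)) * f (Suc (Suc m)) (Suc m)
      + (C * of_nat (Suc m) + of_nat (Suc (Suc m))) * f (Suc m) (Suc (Suc m)) = 0"
    using E[of "Suc (Suc m)" "Suc (Suc m)"] by (simp add: algebra_simps)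
  have "of_nat (Suc m) * C * a = 0"
    using e3 unfolding e1 e2 by (simp add: algebra_simps)
  moreover have "C \<noteq> 0" using assms C_def by simp
  moreover have "(of_nat (Suc m) :: complex) \<noteq> 0" by (rule of_nat_neq_0)
  ultimately show False using a0 by (metis mult_eq_0_iff)
qed

end
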